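(* Let $L$ be a sublattice of $A_n$ of rank $n$. The boundary of $\Sigma^c(L)$ in $\mathbb R^{n+1}$ equals the lower graph of $h_{\triangle,L}$: $$\partial\Sigma^c(L)=\{\,y-h_{\triangle,L}(y)(1,\dots,1): y\in H_0\,\}.$$
   Context: Let $n\ge 1$, $H_0=\{x\in\mathbb R^{n+1}:\sum_i x_i=0\}$ and $A_n=H_0\cap\mathbb Z^{n+1}$. Write $x\le y$ iff $x_i\le y_i$ for all $i$. Let $\Sigma^{\mathbb R}(L)=\{x\in\mathbb R^{n+1}: x\not\le q\text{ for all }q\in L\}$ and let $\Sigma^c(L)$ be its topological closure in $\mathbb R^{n+1}$. For $p,q\in H_0$ let $d_\triangle(p,q)=\max_i(p_i-q_i)$, and for $x\in H_0$ let $h_{\triangle,L}(x)=\min_{p\in L}d_\triangle(x,p)$. *)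

theory Defs
  imports "HOL-Analysis.Analysis"
begin

text \<open>Points of R^(n+1) are modelled as real^'n with CARD('n) = n+1.\<close>

definition H0 :: "(real^'n) set" where
  "H0 = {x. (\<Sum>i\<in>UNIV. x$i) = 0}"

definition A_lat :: "(real^'n) set" where
  "A_lat = {x \<in> H0. \<forall>i. x$i \<in> \<int>}"

definition sublattice_A :: "(real^'n) set \<Rightarrow> bool" where
  "sublattice_A L \<longleftrightarrow> L \<subseteq> A_lat \<and> 0 \<in> L \<and> (\<forall>p\<in>L. \<forall>q\<in>L. p - q \<in> L)"

definition Sigma_R :: "(real^'n) set \<Rightarrow> (real^'n) set" where
  "Sigma_R L = {x. \<forall>q\<in>L. \<not> (\<forall>i. x$i \<le> q$i)}"

definition Sigma_c :: "(real^'n) set \<Rightarrow> (real^'n) set" where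
  "Sigma_c L = closure (Sigma_R L)"

definition d_tri :: "real^'n \<Rightarrow> real^'n \<Rightarrow> real" where
  "d_tri p q = Max (range (\<lambda>i. p$i - q$i))"

definition h_tri :: "(real^'n) set \<Rightarrow> real^'n \<Rightarrow> real" where
  "h_tri L x = Inf ((\<lambda>p. d_tri x p) ` L)"

end

theory Submission
  imports Defs
begin

definition one_v :: "real^'n" where "one_v = (\<chi> i. 1)"

lemma d_tri_ge: "p$i - q$i \<le> d_tri p q"
  unfolding d_tri_def by (intro Max_ge) auto

lemma d_tri_ex: "\<exists>i. d_tri p q = p$i - q$i"
proof -
  have "d_tri p q \<in> range (\<lambda>i. p$i - q$i)" unfolding d_tri_def by (intro Max_in) auto
  then show ?thesis by auto
qed

lemma d_tri_shift: "d_tri (x + c *\<^sub>R one_v) p = d_tri x p + c"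
proof -
  obtain i where i: "d_tri (x + c *\<^sub>R one_v) p = (x + c *\<^sub>R one_v)$i - p$i" using d_tri_ex by blast
  obtain j where j: "d_tri x p = x$j - p$j" using d_tri_ex by blast
  have "(x + c *\<^sub>R one_v)$j - p$j \<le> d_tri (x + c *\<^sub>R one_v) p" by (rule d_tri_ge)
  moreover have "x$i - p$i \<le> d_tri x p" by (rule d_tri_ge)
  ultimately show ?thesis using i j by (simp add: one_v_def)
qed

lemma d_tri_lip: "d_tri x p \<le> d_tri x' p + norm (x - x')"
proof -
  obtain i where i: "d_tri x p = x$i - p$i" using d_tri_ex by blast
  have "\<bar>(x - x')$i\<bar> \<le> norm (x - x')" by (rule component_le_norm_cart)
  moreover have "x'$i - p$i \<le> d_tri x' p" by (rule d_tri_ge)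
  ultimately show ?thesis using i by auto
qed

lemma d_tri_lower:
  assumes "p \<in> H0"
  shows "(\<Sum>i\<in>UNIV. x$i) / CARD('n) \<le> d_tri x (p::real^'n)"
proof -
  have "(\<Sum>i\<in>UNIV. x$i - p$i) \<le> (\<Sum>i\<in>(UNIV::'n set). d_tri x p)"
    by (intro sum_mono) (rule d_tri_ge)
  moreover have "(\<Sum>i\<in>UNIV. x$i - p$i) = (\<Sum>i\<in>UNIV. x$i)"
    using assms by (simp add: sum_subtractf H0_def)
  ultimately have "(\<Sum>i\<in>UNIV. x$i) \<le> CARD('n) * d_tri x p" by simp
  then show ?thesis by (simp add: divide_le_eq mult.commute)
qed

locale hL =
  fixes L :: "(real^'n) set"
  assumes ne: "0 \<in> L" and sub: "L \<subseteq> H0"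
begin

lemma bdd: "bdd_below ((\<lambda>p. d_tri x p) ` L)"
  using d_tri_lower sub unfolding bdd_below_def by blast

lemma h_le: "p \<in> L \<Longrightarrow> h_tri L x \<le> d_tri x p"
  unfolding h_tri_def by (rule cInf_lower) (auto intro: bdd)

lemma h_ge: "(\<And>p. p \<in> L \<Longrightarrow> a \<le> d_tri x p) \<Longrightarrow> a \<le> h_tri L x"
  unfolding h_tri_def using ne by (intro cInf_greatest) auto

lemma h_shift: "h_tri L (x + c *\<^sub>R one_v) = h_tri L x + c"
proof -
  have 1: "h_tri L x + c \<le> h_tri L (x + c *\<^sub>R one_v)"
  proof (rule h_ge)
    fix p assume "p \<in> L"
    then have "h_tri L x \<le> d_tri x p" by (rule h_le)
    then show "h_tri L x + c \<le> d_tri (x + c *\<^sub>R one_v) p" by (simp add: d_tri_shift)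
  qed
  have 2: "h_tri L (x + c *\<^sub>R one_v) - c \<le> h_tri L x"
  proof (rule h_ge)
    fix p assume "p \<in> L"
    then have "h_tri L (x + c *\<^sub>R one_v) \<le> d_tri (x + c *\<^sub>R one_v) p" by (rule h_le)
    then show "h_tri L (x + c *\<^sub>R one_v) - c \<le> d_tri x p" by (simp add: d_tri_shift)
  qed
  from 1 2 show ?thesis by linarith
qed

lemma h_lip: "h_tri L x \<le> h_tri L x' + norm (x - x')"
proof -
  have "h_tri L x - norm (x - x') \<le> h_tri L x'"
  proof (intro h_ge)
    fix p assume "p \<in> L"
    then have "h_tri L x \<le> d_tri x p" by (rule h_le)
    then show "h_tri L x - norm (x - x') \<le> d_tri x' p" using d_tri_lip[of x p x'] by linarith
  qed
  then show ?thesis by linarith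
qed

lemma h_cont: "continuous_on UNIV (h_tri L)"
proof -
  have "1-lipschitz_on UNIV (h_tri L)"
  proof (rule lipschitz_onI)
    fix x y :: "real^'n"
    show "dist (h_tri L x) (h_tri L y) \<le> 1 * dist x y"
      using h_lip[of x y] h_lip[of y x] norm_minus_commute[of x y]
      by (simp add: dist_real_def dist_norm abs_le_iff)
  qed simp
  then show ?thesis by (rule lipschitz_on_continuous_on)
qed

lemma neg_not_sigma: "h_tri L z < 0 \<Longrightarrow> z \<notin> Sigma_R L"
proof -
  assume "h_tri L z < 0"
  then obtain v where "v \<in> (\<lambda>p. d_tri z p) ` L" "v < 0"
    unfolding h_tri_def using ne cInf_lessD[of "(\<lambda>p. d_tri z p) ` L" 0] by blast
  then obtain q where q: "q \<in> L" "d_tri z q < 0" by auto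
  then have "\<forall>i. z$i \<le> q$i" using d_tri_ge[of z _ q] by (metis diff_less_0_iff_less less_eq_real_def order_le_less_trans)
  then show ?thesis using q unfolding Sigma_R_def by auto
qed

lemma not_sigma_nonpos: "z \<notin> Sigma_R L \<Longrightarrow> h_tri L z \<le> 0"
proof -
  assume "z \<notin> Sigma_R L"
  then obtain q where q: "q \<in> L" "\<forall>i. z$i \<le> q$i" unfolding Sigma_R_def by auto
  obtain i where "d_tri z q = z$i - q$i" using d_tri_ex by blast
  then have "d_tri z q \<le> 0" using q by simp
  then show ?thesis using h_le[OF q(1), of z] by linarith
qed

lemma norm_one_pos: "norm (one_v :: real^'n) > 0"
proof -
  have "(one_v :: real^'n) \<noteq> 0" unfolding one_v_def by (metis vec_lambda_beta zero_index zero_neq_one)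
  then show ?thesis by simp
qed

lemma closedG: "closed {z. 0 \<le> h_tri L z}"
    using h_cont by (intro closed_Collect_le) (auto intro: continuous_intros)

lemma closure_eq: "closure (Sigma_R L) = {z. 0 \<le> h_tri L z}"
proof
  have "closed {z. 0 \<le> h_tri L z}"
    using h_cont by (intro closed_Collect_le) (auto intro: continuous_intros)
  moreover have "Sigma_R L \<subseteq> {z. 0 \<le> h_tri L z}"
  proof
    fix z assume "z \<in> Sigma_R L"
    then show "z \<in> {z. 0 \<le> h_tri L z}" using neg_not_sigma[of z] by (metis mem_Collect_eq not_less)
  qed
  ultimately show "closure (Sigma_R L) \<subseteq> {z. 0 \<le> h_tri L z}" by (rule closure_minimal[rotated])
next
  show "{z. 0 \<le> h_tri L z} \<subseteq> closure (Sigma_R L)"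
  proof
    fix z assume z: "z \<in> {z. 0 \<le> h_tri L z}"
    show "z \<in> closure (Sigma_R L)"
    proof (rule iffD2[OF closure_approachable], intro allI impI)
      fix e :: real assume e: "e > 0"
      define c where "c = e / (2 * norm (one_v::real^'n))"
      have c: "c > 0" using e norm_one_pos unfolding c_def by simp
      have "h_tri L (z + c *\<^sub>R one_v) > 0" using h_shift z c by simp
      then have "z + c *\<^sub>R one_v \<in> Sigma_R L" using not_sigma_nonpos by force
      moreover have "dist (z + c *\<^sub>R one_v) z < e"
        using c e norm_one_pos unfolding c_def by (simp add: dist_norm)
      ultimately show "\<exists>y\<in>Sigma_R L. dist y z < e" by blast
    qed
  qed
qed

lemma interior_eq: "interior {z. 0 \<le> h_tri L z} = {z. 0 < h_tri L z}"
proof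
  have "open {z. 0 < h_tri L z}"
    using h_cont by (intro open_Collect_less) (auto intro: continuous_intros)
  then show "{z. 0 < h_tri L z} \<subseteq> interior {z. 0 \<le> h_tri L z}"
    by (intro interior_maximal) auto
next
  show "interior {z. 0 \<le> h_tri L z} \<subseteq> {z. 0 < h_tri L z}"
  proof
    fix z assume z: "z \<in> interior {z. 0 \<le> h_tri L z}"
    then obtain e where e: "e > 0" "ball z e \<subseteq> {z. 0 \<le> h_tri L z}" by (meson mem_interior)
    have h0: "0 \<le> h_tri L z" using z interior_subset by blast
    show "z \<in> {z. 0 < h_tri L z}"
    proof (rule ccontr)
      assume "z \<notin> {z. 0 < h_tri L z}"
      then have hz: "h_tri L z = 0" using h0 by simp
      define c where "c = e / (2 * norm (one_v::real^'n))"
      have c: "c > 0" using e norm_one_pos unfolding c_def by simp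
      have "dist z (z + (-c) *\<^sub>R one_v) < e"
        using c e norm_one_pos unfolding c_def by (simp add: dist_norm)
      then have "z + (-c) *\<^sub>R one_v \<in> ball z e" by (simp only: mem_ball)
      then have "z + (-c) *\<^sub>R one_v \<in> {z. 0 \<le> h_tri L z}" using e(2) by blast
      moreover have "h_tri L (z + (-c) *\<^sub>R one_v) < 0" using h_shift[of z "-c"] hz c by simp
      ultimately show False by simp
    qed
  qed
qed

end

theorem mainTheorem10:
  fixes L :: "(real^'n) set"
  assumes "CARD('n) \<ge> 2"
    and "sublattice_A L"
    and "dim L = CARD('n) - 1"
  shows "frontier (Sigma_c L) = {y - h_tri L y *\<^sub>R (\<chi> i. 1) | y. y \<in> H0}"
proof -
  interpret hL L using assms(2) unfolding sublattice_A_def A_lat_def by unfold_locales auto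
  have "frontier (Sigma_c L) = {z. 0 \<le> h_tri L z} - {z. 0 < h_tri L z}"
    unfolding Sigma_c_def frontier_def closure_closure closure_eq interior_eq closure_closed[OF closedG] by simp
  also have "\<dots> = {z. h_tri L z = 0}" by auto
  also have "\<dots> = {y - h_tri L y *\<^sub>R (\<chi> i. 1) | y. y \<in> H0}"
  proof
    show "{z. h_tri L z = 0} \<subseteq> {y - h_tri L y *\<^sub>R (\<chi> i. 1) | y. y \<in> H0}"
    proof
      fix z assume z: "z \<in> {z. h_tri L z = 0}"
      define s where "s = (\<Sum>i\<in>UNIV. z$i) / CARD('n)"
      define y where "y = z + (-s) *\<^sub>R one_v"
      have "y \<in> H0" unfolding H0_def y_def s_def one_v_def by (simp add: sum_subtractf)
      moreover have "h_tri L y = - s" using h_shift[of z "-s"] z unfolding y_def by simp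
      moreover have "z = y - h_tri L y *\<^sub>R (\<chi> i. 1)"
        using calculation(2) unfolding y_def one_v_def by simp
      ultimately show "z \<in> {y - h_tri L y *\<^sub>R (\<chi> i. 1) | y. y \<in> H0}" by blast
    qed
  next
    show "{y - h_tri L y *\<^sub>R (\<chi> i. 1) | y. y \<in> H0} \<subseteq> {z. h_tri L z = 0}"
    proof clarify
      fix y :: "real^'n"
      have "y - h_tri L y *\<^sub>R (\<chi> i. 1) = y + (- h_tri L y) *\<^sub>R one_v"
        unfolding one_v_def by (simp add: algebra_simps)
      then show "h_tri L (y - h_tri L y *\<^sub>R (\<chi> i. 1)) = 0" using h_shift[of y "- h_tri L y"] unfolding one_v_def by simp
    qed
  qed
  finally show ?thesis .
qed

end
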